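(* Let $\mathcal{L}_{\rm F}$ be the Fibonacci language and let ${\rm S}:\mathcal{L}_{\rm F}\to\mathbb{N}$ be a homomorphism. Let $\mathcal{E}=\{(1,1),(1,2),(1,3),(2,1)\}$. If $({\rm S}(0),{\rm S}(1))\in\mathcal{E}$ then $\mathbb{N}\setminus{\rm S}(\mathcal{L}_{\rm F})$ is empty; otherwise $\mathbb{N}\setminus{\rm S}(\mathcal{L}_{\rm F})$ is infinite.
   Context: $\mathbb{N}=\{1,2,3,\dots\}$ and $[x]$ denotes the integer part (floor) of $x$. Let $\Phi=(1+\sqrt5)/2$ and $\alpha=2-\Phi$. The characteristic word $c_\alpha=(c_\alpha(n))_{n\ge0}$ is the infinite word over $\{0,1\}$ with $c_\alpha(n)=[(n+2)\alpha]-[(n+1)\alpha]$ (the infinite Fibonacci word). The Fibonacci language $\mathcal{L}_{\rm F}$ is the set of all nonempty finite words occurring as factors of $c_\alpha$. A homomorphism ${\rm S}:\mathcal{L}_{\rm F}\to\mathbb{N}$ is a map with ${\rm S}(w_1\cdots w_n)={\rm S}(w_1)+\cdots+{\rm S}(w_n)$, determined by ${\rm S}(0),{\rm S}(1)\in\mathbb{N}$. *)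

theory Defs
  imports Complex_Main
begin

definition phi :: real where "phi = (1 + sqrt 5) / 2"
definition fib_alpha :: real where "fib_alpha = 2 - phi"

text \<open>Characteristic (infinite Fibonacci) word, indexed from 0; values in {0,1}.\<close>
definition cword :: "nat \<Rightarrow> nat" where
  "cword n = nat (\<lfloor>(real n + 2) * fib_alpha\<rfloor> - \<lfloor>(real n + 1) * fib_alpha\<rfloor>)"

definition fib_lang :: "nat list set" where
  "fib_lang = {w. w \<noteq> [] \<and> (\<exists>i. \<forall>k<length w. w ! k = cword (i + k))}"

definition hom_S :: "nat \<Rightarrow> nat \<Rightarrow> nat list \<Rightarrow> nat" where
  "hom_S a b w = (\<Sum>x\<leftarrow>w. if x = 0 then a else b)"

end

theory Submission imports Defs "HOL-Analysis.Kronecker_Approximation_Theorem" "HOL-Computational_Algebra.Primes"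
begin

lemma sqrt5_irr: "sqrt (real (5::nat)) \<notin> \<rat>"
proof
  have p: "prime (5::nat)" by (simp add: prime_nat_iff' atLeastLessThan_nat_numeral)
  assume "sqrt (real (5::nat)) \<in> \<rat>"
  then obtain m n :: nat
    where n: "n \<noteq> 0" and sq: "\<bar>sqrt (real (5::nat))\<bar> = m / n" and "coprime m n"
    by (rule Rats_abs_nat_div_natE)
  have "real m = sqrt 5 * n" using n sq by (simp add: field_simps)
  then have "real (m^2) = real (5 * n^2)" by (simp add: power_mult_distrib)
  then have eq: "m^2 = 5 * n^2" by linarith
  have "5 dvd m" using eq p by (metis dvd_triv_left prime_dvd_power)
  then obtain k where "m = 5 * k" ..
  with eq have "n^2 = 5 * k^2" by (simp add: power2_eq_square)
  then have "5 dvd n" using p by (metis dvd_triv_left prime_dvd_power)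
  with \<open>5 dvd m\<close> \<open>coprime m n\<close> show False
    by (metis coprime_common_divisor_nat numeral_eq_one_iff semiring_norm(86))
qed

lemma alpha_irr: "fib_alpha \<notin> \<rat>"
proof
  assume "fib_alpha \<in> \<rat>"
  then have "3 - 2 * fib_alpha \<in> \<rat>" by simp
  moreover have "3 - 2 * fib_alpha = sqrt (real (5::nat))" by (simp add: fib_alpha_def phi_def algebra_simps)
  ultimately show False using sqrt5_irr by simp
qed

lemma sqrt5_bounds: "2.236 < sqrt (5::real)" "sqrt (5::real) < 2.2361"
proof -
  show "2.236 < sqrt (5::real)" by (rule real_less_rsqrt) (simp add: power2_eq_square)
  show "sqrt (5::real) < 2.2361" proof -
    have "sqrt (5::real) < sqrt (2.2361^2)" by (rule real_sqrt_less_mono) (simp add: power2_eq_square)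
    then show ?thesis by simp
  qed
qed

lemma alpha_bounds: "0.3819 < fib_alpha" "fib_alpha < 0.382"
  using sqrt5_bounds by (simp_all add: fib_alpha_def phi_def)

definition F :: "nat \<Rightarrow> int" where "F m = \<lfloor>real m * fib_alpha\<rfloor>"

lemma F_step: "F (Suc m) - F m \<in> {0,1}"
proof -
  have e: "real (Suc m) * fib_alpha = real m * fib_alpha + fib_alpha" by (simp add: algebra_simps)
  have "\<lfloor>real m * fib_alpha + fib_alpha\<rfloor> \<ge> \<lfloor>real m * fib_alpha\<rfloor>"
    using alpha_bounds by (intro floor_mono) auto
  moreover have "\<lfloor>real m * fib_alpha + fib_alpha\<rfloor> \<le> \<lfloor>real m * fib_alpha\<rfloor> + 1"
  proof -
    have "\<lfloor>real m * fib_alpha + fib_alpha\<rfloor> \<le> \<lfloor>real m * fib_alpha + 1\<rfloor>"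
      using alpha_bounds by (intro floor_mono) auto
    then show ?thesis by simp
  qed
  ultimately show ?thesis unfolding F_def e by auto
qed

lemma F_step2: "F (Suc (Suc m)) \<le> F m + 1"
proof -
  have e: "real (Suc (Suc m)) * fib_alpha = real m * fib_alpha + 2*fib_alpha" by (simp add: algebra_simps)
  have "\<lfloor>real m * fib_alpha + 2*fib_alpha\<rfloor> \<le> \<lfloor>real m * fib_alpha + 1\<rfloor>"
    using alpha_bounds by (intro floor_mono) auto
  then show ?thesis unfolding F_def e by simp
qed

lemma F_0: "F 0 = 0" and F_1: "F 1 = 0" and F_2: "F 2 = 0"
  using alpha_bounds by (simp_all add: F_def floor_eq_iff)

lemma F_nonneg: "F m \<ge> 0"
  using alpha_bounds unfolding F_def by simp

lemma F_bounds: "real m * fib_alpha - 1 < F m" "F m \<le> real m * fib_alpha"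
  unfolding F_def by linarith+

lemma cword_int: "int (cword n) = F (n+2) - F (n+1)"
proof -
  have "F (n+2) - F (n+1) \<ge> 0" using F_step[of "n+1"] by auto
  then show ?thesis unfolding cword_def F_def by (simp add: add.commute)
qed

lemma cword_le1: "cword n \<le> 1"
  using cword_int[of n] F_step[of "n+1"] by auto

definition ones :: "nat \<Rightarrow> nat \<Rightarrow> nat" where "ones i n = (\<Sum>k<n. cword (i+k))"

lemma ones_int: "int (ones i n) = F (i+n+1) - F (i+1)"
proof (induction n)
  case 0 then show ?case by (simp add: ones_def)
next
  case (Suc n)
  have "int (ones i (Suc n)) = int (ones i n) + int (cword (i+n))" by (simp add: ones_def)
  also have "\<dots> = F (i + Suc n + 1) - F (i+1)" using Suc cword_int[of "i+n"] by simp
  finally show ?case .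
qed

lemma ones_le: "ones i n \<le> n"
proof -
  have "ones i n \<le> (\<Sum>k<n. 1)" unfolding ones_def by (rule sum_mono) (rule cword_le1)
  then show ?thesis by simp
qed

lemma balance: "F (i+n+1) - F (i+1) - F n \<in> {0,1}"
proof -
  have e: "real (i+n+1) * fib_alpha = real (i+1) * fib_alpha + real n * fib_alpha" by (simp add: algebra_simps)
  show ?thesis unfolding F_def e floor_add by auto
qed

lemma frac_pos: assumes "n \<ge> 1" shows "frac (real n * fib_alpha) > 0"
proof -
  have "real n * fib_alpha \<notin> \<int>"
  proof
    assume "real n * fib_alpha \<in> \<int>"
    then have "real n * fib_alpha \<in> \<rat>" using Ints_subset_Rats by blast
    then have "real n * fib_alpha / real n \<in> \<rat>" by (intro Rats_divide) auto
    moreover have "real n * fib_alpha / real n = fib_alpha" using assms by simp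
    ultimately show False using alpha_irr by simp
  qed
  then show ?thesis using frac_ge_0 frac_eq_0_iff by (metis less_le)
qed

lemma realize: assumes "n \<ge> 1" "e \<le> (1::nat)"
  shows "\<exists>i. int (ones i n) = F n + int e"
proof -
  define f where "f = frac (real n * fib_alpha)"
  have f: "0 < f" "f < 1" using frac_pos[OF assms(1)] frac_lt_1 by (auto simp: f_def)
  have K: "\<exists>k. k>0 \<and> \<bar>frac (real k * fib_alpha) - t\<bar> < ep" if "0 \<le> t" "t \<le> 1" "ep>0" for t ep
    using Kronecker_approx_1_explicit[OF alpha_irr that] by blast
  have "\<exists>k. k>0 \<and> \<bar>frac (real k * fib_alpha) - real e\<bar> < (if e = 0 then 1 - f else f)"
    using K[of "real e" "if e = 0 then 1 - f else f"] f assms(2) by (cases e) auto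
  then obtain k where k: "k > 0" "\<bar>frac (real k * fib_alpha) - real e\<bar> < (if e = 0 then 1 - f else f)"
    by blast
  have e: "real (k - 1 + n + 1) * fib_alpha = real k * fib_alpha + real n * fib_alpha"
    using k(1) by (simp add: algebra_simps)
  have "F (k - 1 + n + 1) - F (k - 1 + 1) = F n + int e"
    using k(1) k(2) assms(2) frac_lt_1[of "real k * fib_alpha"] frac_ge_0[of "real k * fib_alpha"]
    unfolding F_def e floor_add f_def[symmetric] by (cases e) auto
  then show ?thesis using ones_int by metis
qed

lemma fib_lang_mem: "w \<in> fib_lang \<longleftrightarrow> (\<exists>i n. n \<ge> 1 \<and> w = map (\<lambda>k. cword (i+k)) [0..<n])"
proof
  assume "w \<in> fib_lang"
  then obtain i where w: "w \<noteq> []" "\<forall>k<length w. w ! k = cword (i + k)" unfolding fib_lang_def by blast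
  have "w = map (\<lambda>k. cword (i+k)) [0..<length w]" by (rule nth_equalityI) (use w in auto)
  then show "\<exists>i n. n \<ge> 1 \<and> w = map (\<lambda>k. cword (i+k)) [0..<n]" using w(1)
    by (metis One_nat_def Suc_leI length_greater_0_conv)
next
  assume "\<exists>i n. n \<ge> 1 \<and> w = map (\<lambda>k. cword (i+k)) [0..<n]"
  then show "w \<in> fib_lang" unfolding fib_lang_def by auto
qed

lemma hom_map: "hom_S a b (map (\<lambda>k. cword (i+k)) [0..<n]) = a*(n - ones i n) + b * ones i n"
proof (induction n)
  case 0 then show ?case by (simp add: hom_S_def ones_def)
next
  case (Suc n)
  have le: "ones i n \<le> n" by (rule ones_le)
  have o: "ones i (Suc n) = ones i n + cword (i+n)" by (simp add: ones_def)
  have h: "hom_S a b (map (\<lambda>k. cword (i+k)) [0..<Suc n]) = hom_S a b (map (\<lambda>k. cword (i+k)) [0..<n])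
      + (if cword (i+n) = 0 then a else b)" by (simp add: hom_S_def)
  show ?case
  proof (cases "cword (i+n) = 0")
    case True
    then show ?thesis using h o Suc le by (simp add: Suc_diff_le)
  next
    case False
    then have "cword (i+n) = 1" using cword_le1[of "i+n"] by linarith
    then show ?thesis using h o Suc le by simp
  qed
qed

definition G :: "nat \<Rightarrow> nat" where "G n = nat (F n)"

lemma G_int: "int (G n) = F n" using F_nonneg by (simp add: G_def)

lemma img_sub: assumes "v \<in> hom_S a b ` fib_lang"
  shows "\<exists>n e. n \<ge> 1 \<and> e \<le> (1::nat) \<and> G n + e \<le> n \<and> v = a*(n - (G n + e)) + b*(G n + e)"
proof -
  obtain w where "w \<in> fib_lang" "v = hom_S a b w" using assms by blast
  then obtain i n where n: "n \<ge> 1" and v: "v = a*(n - ones i n) + b * ones i n"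
    using fib_lang_mem hom_map by metis
  have "int (ones i n) - int (G n) \<in> {0,1}" using balance[of i n] ones_int[of i n] G_int[of n] by simp
  then have "ones i n = G n + 0 \<or> ones i n = G n + 1" by auto
  then obtain e where e: "e \<le> (1::nat)" "ones i n = G n + e" by blast
  show ?thesis using n v e ones_le[of i n] by metis
qed

lemma img_sup: assumes "n \<ge> 1" "e \<le> (1::nat)"
  shows "a*(n - (G n + e)) + b*(G n + e) \<in> hom_S a b ` fib_lang"
proof -
  obtain i where "int (ones i n) = F n + int e" using realize[OF assms] by blast
  then have o: "ones i n = G n + e" using G_int by (metis of_nat_add of_nat_eq_iff)
  have "map (\<lambda>k. cword (i+k)) [0..<n] \<in> fib_lang" using fib_lang_mem assms(1) by blast
  then show ?thesis using hom_map[of a b i n] o by (metis image_eqI)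
qed

lemma G_step: "G (Suc n) = G n \<or> G (Suc n) = G n + 1"
  using F_step[of n] G_int[of n] G_int[of "Suc n"] by auto

lemma G_step2: "G (Suc (Suc n)) \<le> G n + 1"
  using F_step2[of n] G_int[of n] G_int[of "Suc (Suc n)"] by auto

lemma G_1: "G 1 = 0" and G_2: "G 2 = 0" using F_1 F_2 by (simp_all add: G_def)

lemma G_lt: assumes "n \<ge> 1" shows "G n + 1 \<le> n"
proof (cases "n = 1")
  case True then show ?thesis using G_1 by simp
next
  case False
  then have n2: "real n \<ge> 2" using assms by simp
  have "real (G n) \<le> real n * fib_alpha" using F_bounds(2)[of n] G_int[of n]
    by (metis of_int_of_nat_eq)
  also have "\<dots> \<le> real n * (1/2)" using alpha_bounds n2 by (intro mult_left_mono) auto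
  finally have "real (G n) + 1 \<le> real n" using n2 by linarith
  then show ?thesis by linarith
qed

lemma cover:
  fixes p :: "nat \<Rightarrow> nat"
  assumes mono: "\<And>n. n \<ge> 1 \<Longrightarrow> p n < p (Suc n)"
    and jump: "\<And>n. n \<ge> 1 \<Longrightarrow> p (Suc n) \<le> p n + d + 1"
    and N: "N \<ge> p 1"
  shows "\<exists>n\<ge>1. p n \<le> N \<and> N \<le> p n + d"
  using N
proof (induction N rule: dec_induct)
  case base then show ?case by (intro exI[of _ 1]) auto
next
  case (step N)
  then obtain n where n: "n \<ge> 1" "p n \<le> N" "N \<le> p n + d" by blast
  show ?case
  proof (cases "Suc N \<le> p n + d")
    case True then show ?thesis using n by (intro exI[of _ n]) auto
  next
    case False
    then have "N = p n + d" using n by linarith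
    then show ?thesis using mono[OF n(1)] jump[OF n(1)] n(1) by (intro exI[of _ "Suc n"]) auto
  qed
qed

lemma dir1:
  assumes "(a, b) \<in> {(1,1),(1,2),(1,3),(2,1)}" and N: "N \<ge> (1::nat)"
  shows "\<exists>n e. n \<ge> 1 \<and> e \<le> (1::nat) \<and> N = a*(n - (G n + e)) + b*(G n + e)"
proof -
  consider "a = 1" "b = 1" | "a = 1" "b = 2" | "a = 1" "b = 3" | "a = 2" "b = 1" using assms(1) by auto
  then show ?thesis
  proof cases
    case 1
    then show ?thesis using N G_lt[OF N] by (intro exI[of _ N] exI[of _ 0]) auto
  next
    case 2
    have "\<exists>n\<ge>1. n + G n \<le> N \<and> N \<le> n + G n + 1"
    proof (rule cover[where p="\<lambda>n. n + G n"])
      show "n + G n < Suc n + G (Suc n)" for n using G_step[of n] by auto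
      show "Suc n + G (Suc n) \<le> n + G n + 1 + 1" for n using G_step[of n] by auto
      show "1 + G 1 \<le> N" using G_1 N by simp
    qed
    then obtain n where n: "n \<ge> 1" "n + G n \<le> N" "N \<le> n + G n + 1" by blast
    have "N = n + G n + 0 \<or> N = n + G n + 1" using n by linarith
    then obtain e where e: "e \<le> (1::nat)" "N = n + G n + e" by blast
    show ?thesis using n e G_lt[OF n(1)] 2 by (intro exI[of _ n] exI[of _ e]) auto
  next
    case 3
    have "\<exists>n\<ge>1. n + 2 * G n \<le> N \<and> N \<le> n + 2 * G n + 2"
    proof (rule cover[where p="\<lambda>n. n + 2 * G n"])
      show "n + 2 * G n < Suc n + 2 * G (Suc n)" for n using G_step[of n] by auto
      show "Suc n + 2 * G (Suc n) \<le> n + 2 * G n + 2 + 1" for n using G_step[of n] by auto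
      show "1 + 2 * G 1 \<le> N" using G_1 N by simp
    qed
    then obtain n where n: "n \<ge> 1" "n + 2 * G n \<le> N" "N \<le> n + 2 * G n + 2" by blast
    have val: "a*(m - (G m + e)) + b*(G m + e) = m + 2 * G m + 2 * e" if "m \<ge> 1" "e \<le> 1" for m e
      using G_lt[OF that(1)] that 3 by auto
    consider "N = n + 2 * G n" | "N = n + 2 * G n + 2" | "N = n + 2 * G n + 1" using n by linarith
    then show ?thesis
    proof cases
      case 1 then show ?thesis using val[of n 0] n(1) by (intro exI[of _ n] exI[of _ 0]) auto
    next
      case 2 then show ?thesis using val[of n 1] n(1) by (intro exI[of _ n] exI[of _ 1]) auto
    next
      case 4: 3
      show ?thesis
      proof (cases "G (Suc n) = G n")
        case True
        then show ?thesis using val[of "Suc n" 0] 4 by (intro exI[of _ "Suc n"] exI[of _ 0]) auto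
      next
        case False
        then have gs: "G (Suc n) = G n + 1" using G_step[of n] by auto
        have "n \<noteq> 1"
        proof
          assume "n = 1"
          then have "G (Suc n) = G 2" by (simp add: numeral_2_eq_2)
          then show False using gs G_1 G_2 \<open>n = 1\<close> by simp
        qed
        then obtain m where m: "n = Suc m" "m \<ge> 1" using n(1) by (cases n) auto
        have "G n = G m" using G_step[of m] G_step2[of m] gs m(1) by auto
        then show ?thesis using val[of m 1] 4 m by (intro exI[of _ m] exI[of _ 1]) auto
      qed
    qed
  next
    case 4
    have val: "a*(m - (G m + e)) + b*(G m + e) = 2 * m - G m - e" if "m \<ge> 1" "e \<le> 1" for m e
      using G_lt[OF that(1)] that 4 by auto
    have "\<exists>n\<ge>1. 2 * n - G n - 1 \<le> N \<and> N \<le> 2 * n - G n - 1 + 1"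
    proof (rule cover[where p="\<lambda>n. 2 * n - G n - 1"])
      show "2 * n - G n - 1 < 2 * Suc n - G (Suc n) - 1" if "n \<ge> 1" for n
        using G_step[of n] G_lt[OF that] by auto
      show "2 * Suc n - G (Suc n) - 1 \<le> 2 * n - G n - 1 + 1 + 1" if "n \<ge> 1" for n
        using G_step[of n] G_lt[OF that] by auto
      show "2 * 1 - G 1 - 1 \<le> N" using G_1 N by simp
    qed
    then obtain n where n: "n \<ge> 1" "2 * n - G n - 1 \<le> N" "N \<le> 2 * n - G n - 1 + 1" by blast
    consider "N = 2 * n - G n - 1" | "N = 2 * n - G n - 0" using n G_lt[OF n(1)] by linarith
    then show ?thesis
    proof cases
      case 1 then show ?thesis using val[of n 1] n(1) by (intro exI[of _ n] exI[of _ 1]) auto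
    next
      case 2 then show ?thesis using val[of n 0] n(1) by (intro exI[of _ n] exI[of _ 0]) auto
    qed
  qed
qed

lemma c_gt2:
  assumes "a \<ge> 1" "b \<ge> 1" "(a, b) \<notin> {(1,1),(1,2),(1,3),(2,1)}" "(a, b) \<noteq> (2,2)"
  shows "real a * (1 - fib_alpha) + real b * fib_alpha > 2"
proof -
  have al: "3819/10000 < fib_alpha" "fib_alpha < 382/1000" using alpha_bounds by simp_all
  consider "a \<ge> 3" | "a = 2" "b \<ge> 3" | "a = 1" "b \<ge> 4" using assms by fastforce
  then show ?thesis
  proof cases
    case 1
    have "real a * (1 - fib_alpha) \<ge> 3 * (1 - fib_alpha)" using 1 al by (intro mult_right_mono) auto
    moreover have "real b * fib_alpha \<ge> 1 * fib_alpha" using assms(2) al by (intro mult_right_mono) auto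
    ultimately have "real a * (1 - fib_alpha) + real b * fib_alpha \<ge> 3 * (1 - fib_alpha) + 1 * fib_alpha"
      by (rule add_mono)
    moreover have "\<And>x y::real. x \<ge> 3*(1-y)+1*y \<Longrightarrow> y < 382/1000 \<Longrightarrow> 2 < x" by (simp add: algebra_simps)
    ultimately show ?thesis using al by blast
  next
    case 2
    have "real b * fib_alpha \<ge> 3 * fib_alpha" using 2 al by (intro mult_right_mono) auto
    moreover have "\<And>(x::real) (y::real). x \<ge> 3 * y \<Longrightarrow> 3819/10000 < y \<Longrightarrow> y < 382/1000 \<Longrightarrow> 2 * (1 - y) + x > 2" by (simp add: algebra_simps)
    ultimately have "2 * (1 - fib_alpha) + real b * fib_alpha > 2" using al by blast
    then show ?thesis using 2 by simp
  next
    case 3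
    have "real b * fib_alpha \<ge> 4 * fib_alpha" using 3 al by (intro mult_right_mono) auto
    moreover have "\<And>(x::real) (y::real). x \<ge> 4 * y \<Longrightarrow> 3819/10000 < y \<Longrightarrow> y < 382/1000 \<Longrightarrow> 1 * (1 - y) + x > 2" by (simp add: algebra_simps)
    ultimately have "1 * (1 - fib_alpha) + real b * fib_alpha > 2" using al by blast
    then show ?thesis using 3 by simp
  qed
qed

lemma val_lower:
  assumes "n \<ge> 1" "e \<le> (1::nat)" "G n + e \<le> n"
  shows "real (a*(n - (G n + e)) + b*(G n + e)) \<ge> (real a * (1 - fib_alpha) + real b * fib_alpha) * real n - real (a + b)"
proof -
  define K where "K = G n + e"
  have GF: "real (G n) = real_of_int (F n)" using G_int[of n] by (metis of_int_of_nat_eq)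
  have K1: "real K \<ge> real n * fib_alpha - 1" using F_bounds(1)[of n] GF by (simp add: K_def)
  have K2: "real K \<le> real n * fib_alpha + 1" using F_bounds(2)[of n] GF assms(2) by (simp add: K_def)
  have Kn: "K \<le> n" using assms(3) by (simp add: K_def)
  have "real (a*(n - K) + b*K) = real a * (real n - real K) + real b * real K" using Kn by (simp add: of_nat_diff)
  also have "\<dots> \<ge> real a * (real n - (real n * fib_alpha + 1)) + real b * (real n * fib_alpha - 1)"
    using K1 K2 by (intro add_mono mult_left_mono) auto
  finally show ?thesis unfolding K_def by (simp add: algebra_simps)
qed

lemma dir2_main:
  assumes c: "real a * (1 - fib_alpha) + real b * fib_alpha > 2"
  shows "infinite ({n::nat. n \<ge> 1} - hom_S a b ` fib_lang)"
proof
  define c where "c = real a * (1 - fib_alpha) + real b * fib_alpha"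
  have c2: "c > 2" using c by (simp add: c_def)
  assume fin: "finite ({n::nat. n \<ge> 1} - hom_S a b ` fib_lang)"
  obtain N1 where N1: "\<forall>x \<in> {n::nat. n \<ge> 1} - hom_S a b ` fib_lang. x < N1"
    using finite_nat_bounded[OF fin] by (auto simp: lessThan_def)
  define N0 where "N0 = N1 + 1"
  have all: "N \<in> hom_S a b ` fib_lang" if "N \<ge> N0" for N
  proof (rule ccontr)
    assume "N \<notin> hom_S a b ` fib_lang"
    then have "N \<in> {n::nat. n \<ge> 1} - hom_S a b ` fib_lang" using that by (simp add: N0_def)
    then have "N < N1" using N1 by blast
    then show False using that unfolding N0_def by simp
  qed
  define D where "D = real (a + b)"
  define q where "q = 1 - 2 / c"
  have q: "q > 0" using c2 by (simp add: q_def field_simps)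
  obtain X :: nat where X: "real X > (real N0 + 3 + 2 * D / c) / q"
    using reals_Archimedean2 by blast
  have Xq: "real X * q > real N0 + 3 + 2 * D / c" using X q by (simp add: field_simps)
  define Mn where "Mn = nat \<lceil>(real X + D) / c\<rceil>"
  define f where "f = (\<lambda>(n, e). a*(n - (G n + e)) + b*(G n + e))"
  have sub: "{N0..X} \<subseteq> f ` ({1..Mn} \<times> {0..1})"
  proof
    fix N assume N: "N \<in> {N0..X}"
    then obtain n e where ne: "n \<ge> 1" "e \<le> (1::nat)" "G n + e \<le> n" "N = a*(n - (G n + e)) + b*(G n + e)"
      using img_sub[OF all[of N]] by auto
    have "c * real n - D \<le> real N" using val_lower[OF ne(1-3), of a b] ne(4) by (simp add: c_def D_def)
    also have "\<dots> \<le> real X" using N by simp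
    finally have "real n \<le> (real X + D) / c" using c2 by (simp add: field_simps)
    then have "n \<le> Mn" unfolding Mn_def by linarith
    then show "N \<in> f ` ({1..Mn} \<times> {0..1})" using ne unfolding f_def by force
  qed
  have "card {N0..X} \<le> card (f ` ({1..Mn} \<times> {0..1}))" by (rule card_mono[OF _ sub]) auto
  also have "\<dots> \<le> card ({1..Mn} \<times> {0..(1::nat)})" by (rule card_image_le) auto
  also have "\<dots> = 2 * Mn" by simp
  finally have "Suc X - N0 \<le> 2 * Mn" by simp
  then have "real X + 1 - real N0 \<le> 2 * real Mn" by linarith
  moreover have "real Mn \<le> (real X + D) / c + 1" unfolding Mn_def
    using c2 D_def by (simp add: divide_nonneg_nonneg)
  ultimately have "real X + 1 - real N0 \<le> 2 * (real X + D) / c + 2" by linarith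
  moreover have "2 * (real X + D) / c = real X * (2 / c) + 2 * D / c" by (simp add: add_divide_distrib algebra_simps)
  ultimately show False using Xq unfolding q_def by (simp add: algebra_simps)
qed

lemma even_img: assumes "v \<in> hom_S 2 2 ` fib_lang" shows "even v"
proof -
  obtain n e where "G n + e \<le> n" "v = 2*(n - (G n + e)) + 2*(G n + e)"
    using img_sub[OF assms] by blast
  then show ?thesis by simp
qed

theorem theorem6:
  fixes a b :: nat
  assumes "a \<ge> 1" and "b \<ge> 1"
  shows "((a, b) \<in> {(1,1),(1,2),(1,3),(2,1)} \<longrightarrow>
            {n::nat. n \<ge> 1} - hom_S a b ` fib_lang = {}) \<and>
         ((a, b) \<notin> {(1,1),(1,2),(1,3),(2,1)} \<longrightarrow>
            infinite ({n::nat. n \<ge> 1} - hom_S a b ` fib_lang))"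
proof (intro conjI impI)
  assume E: "(a, b) \<in> {(1,1),(1,2),(1,3),(2,1)}"
  show "{n::nat. n \<ge> 1} - hom_S a b ` fib_lang = {}"
  proof (rule ccontr)
    assume "{n::nat. n \<ge> 1} - hom_S a b ` fib_lang \<noteq> {}"
    then obtain N where N: "N \<ge> 1" "N \<notin> hom_S a b ` fib_lang" by blast
    obtain n e where "n \<ge> 1" "e \<le> (1::nat)" "N = a*(n - (G n + e)) + b*(G n + e)"
      using dir1[OF E N(1)] by blast
    then show False using img_sup N(2) by metis
  qed
next
  assume E: "(a, b) \<notin> {(1,1),(1,2),(1,3),(2,1)}"
  show "infinite ({n::nat. n \<ge> 1} - hom_S a b ` fib_lang)"
  proof (cases "(a, b) = (2,2)")
    case False
    show ?thesis by (rule dir2_main[OF c_gt2[OF assms E False]])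
  next
    case True
    have "range (\<lambda>m::nat. 2*m+1) \<subseteq> {n::nat. n \<ge> 1} - hom_S a b ` fib_lang"
    proof
      fix x assume "x \<in> range (\<lambda>m::nat. 2*m+1)"
      then obtain m where x: "x = 2*m+1" by blast
      have "odd x" using x by simp
      then have "x \<notin> hom_S 2 2 ` fib_lang" using even_img by blast
      then show "x \<in> {n::nat. n \<ge> 1} - hom_S a b ` fib_lang" using True x by simp
    qed
    moreover have "infinite (range (\<lambda>m::nat. 2*m+1))"
      by (rule range_inj_infinite) (auto simp: inj_def)
    ultimately show ?thesis using finite_subset by blast
  qed
qed

end
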